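(* Let $c>0$. Then for all $0<t<\pi/2$, $$\frac{2\int_{-t}^{t}e^{c\sin b}\,db}{\int_{0}^{2\pi}e^{c\cos a}\,da}<\frac{2t}{\pi}.$$
   Context: In the paper $c=\rho rs/(1-\rho^2)$ with $0<\rho<1$, $r,s>0$. *)

theory Defs
  imports "HOL-Analysis.Analysis"
begin

end

theory Submission
  imports Defs
begin

lemma intg: "(\<lambda>x. exp (k * sin x)) integrable_on {a..b::real}"
  by (intro integrable_continuous_real continuous_intros)

lemma sym_int:
  fixes k T :: real
  assumes "T \<ge> 0"
  shows "integral {-T..T} (\<lambda>b. exp (k * sin b))
       = integral {0..T} (\<lambda>b. exp (k * sin b) + exp (-k * sin b))"
proof -
  have "integral {-T..T} (\<lambda>b. exp (k * sin b))
      = integral {-T..0} (\<lambda>b. exp (k * sin b)) + integral {0..T} (\<lambda>b. exp (k * sin b))"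
    using Henstock_Kurzweil_Integration.integral_combine[where f="\<lambda>b. exp (k * sin b)" and a="-T" and c=0 and b=T] assms intg by auto
  moreover have "integral {-T..0} (\<lambda>b. exp (k * sin b)) = integral {0..T} (\<lambda>b. exp (-k * sin b))"
    using Henstock_Kurzweil_Integration.integral_reflect_real[of T 0 "\<lambda>b. exp (-k * sin b)"] by simp
  moreover have "integral {0..T} (\<lambda>b. exp (k * sin b) + exp (-k * sin b))
     = integral {0..T} (\<lambda>b. exp (k * sin b)) + integral {0..T} (\<lambda>b. exp (-k * sin b))"
    by (rule integral_add) (rule intg, rule intg)
  ultimately show ?thesis by simp
qed

lemma whole_int:
  fixes c :: real
  shows "integral {0..2 * pi} (\<lambda>a. exp (c * cos a))
       = 2 * integral {0..pi/2} (\<lambda>b. exp (c * sin b) + exp (-c * sin b))"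
proof -
  let ?h = "\<lambda>b. exp (-c * sin b)"
  have "integral {0 - pi/2..2*pi - pi/2} (\<lambda>x. exp (c * cos (x + pi/2)))
        = integral {0..2 * pi} (\<lambda>a. exp (c * cos a))"
    by (rule integral_shift_real_ivl)
  moreover have "(\<lambda>x. exp (c * cos (x + pi/2))) = ?h"
    by (auto simp: cos_add)
  moreover have "{0 - pi/2..2*pi - pi/2} = {-(pi/2)..3*pi/2}" by auto
  ultimately have J: "integral {0..2 * pi} (\<lambda>a. exp (c * cos a)) = integral {-(pi/2)..3*pi/2} ?h"
    by simp
  have "integral {-(pi/2)..3*pi/2} ?h = integral {-(pi/2)..pi/2} ?h + integral {pi/2..3*pi/2} ?h"
    using Henstock_Kurzweil_Integration.integral_combine[where f= ?h and a="-(pi/2)" and c="pi/2" and b="3*pi/2"] intg[of "-c"] by auto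
  moreover have "integral {-(pi/2)..pi/2} ?h
      = integral {0..pi/2} (\<lambda>b. exp (c * sin b) + exp (-c * sin b))"
    using sym_int[of "pi/2" "-c"] by (simp add: add.commute)
  moreover have "integral {pi/2..3*pi/2} ?h = integral {-(pi/2)..pi/2} ?h"
  proof -
    have "integral {-(3*pi/2)..-(pi/2)} (\<lambda>x. ?h (-x)) = integral {pi/2..3*pi/2} ?h"
      by (rule Henstock_Kurzweil_Integration.integral_reflect_real)
    moreover have "integral {-(pi/2) - pi..pi/2 - pi} (\<lambda>x. (\<lambda>u. ?h (pi - u)) (x + pi))
        = integral {-(pi/2)..pi/2} (\<lambda>u. ?h (pi - u))"
      by (rule integral_shift_real_ivl)
    moreover have "{-(pi/2) - pi..pi/2 - pi} = {-(3*pi/2)..-(pi/2)}" by auto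
    moreover have "(\<lambda>x. (\<lambda>u. ?h (pi - u)) (x + pi)) = (\<lambda>x. ?h (-x))" by auto
    moreover have "(\<lambda>u. ?h (pi - u)) = ?h" by auto
    ultimately show ?thesis by simp
  qed
  ultimately show ?thesis using J by simp
qed

theorem lemma3p2:
  fixes c t :: real
  assumes "c > 0" and "0 < t" and "t < pi / 2"
  shows "2 * integral {-t..t} (\<lambda>b. exp (c * sin b))
           / integral {0..2 * pi} (\<lambda>a. exp (c * cos a)) < 2 * t / pi"
proof -
  define g where "g = (\<lambda>b. exp (c * sin b) + exp (-c * sin b))"
  define s where "s = pi / 2"
  define m where "m = (t + s) / 2"
  have gint: "g integrable_on {a..b}" for a b
    unfolding g_def by (intro integrable_continuous_real continuous_intros)
  have gc: "g x = 2 * cosh (c * sin x)" for x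
    by (simp add: g_def cosh_def)
  have gle: "g x \<le> g y" if "0 \<le> x" "x \<le> y" "y \<le> s" for x y
  proof -
    have "sin x \<le> sin y" using that sin_monotone_2pi_le[of x y] by (auto simp: s_def)
    moreover have "0 \<le> sin x" using that by (intro sin_ge_zero) (auto simp: s_def)
    ultimately show ?thesis using assms(1) by (simp add: gc cosh_real_nonneg_le_iff mult_left_mono)
  qed
  have glt: "g x < g y" if "0 \<le> x" "x < y" "y \<le> s" for x y
  proof -
    have "sin x < sin y" using that sin_monotone_2pi[of x y] by (auto simp: s_def)
    moreover have "0 \<le> sin x" using that by (intro sin_ge_zero) (auto simp: s_def)
    ultimately show ?thesis using assms(1) by (simp add: gc cosh_real_nonneg_less_iff)
  qed
  have ts: "t < m" "m < s" using assms by (auto simp: m_def s_def)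
  define At where "At = integral {0..t} g"
  define B1 where "B1 = integral {t..m} g"
  define B2 where "B2 = integral {m..s} g"
  define As where "As = integral {0..s} g"
  have As_eq: "As = At + B1 + B2"
    unfolding As_def At_def B1_def B2_def
    using Henstock_Kurzweil_Integration.integral_combine[where f=g and a=0 and c=t and b=s] Henstock_Kurzweil_Integration.integral_combine[where f=g and a=t and c=m and b=s] ts assms gint
    by auto
  have h1: "At \<le> t * g t"
  proof -
    have "At \<le> integral {0..t} (\<lambda>x. g t)"
      unfolding At_def by (rule integral_le) (use gint gle ts assms in auto)
    thus ?thesis using assms by simp
  qed
  have h2: "(m - t) * g t \<le> B1"
  proof -
    have "integral {t..m} (\<lambda>x. g t) \<le> B1"
      unfolding B1_def by (rule integral_le) (use gint gle ts assms in auto)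
    thus ?thesis using ts by simp
  qed
  have h3: "(s - m) * g m \<le> B2"
  proof -
    have "integral {m..s} (\<lambda>x. g m) \<le> B2"
      unfolding B2_def by (rule integral_le) (use gint gle ts assms in auto)
    thus ?thesis using ts by simp
  qed
  have gtm: "g t < g m" using glt ts assms by auto
  have "(s - t) * At \<le> (s - t) * (t * g t)" using h1 ts by (intro mult_left_mono) auto
  also have "\<dots> = t * ((m - t) * g t + (s - m) * g t)" by (simp add: algebra_simps)
  also have "\<dots> < t * ((m - t) * g t + (s - m) * g m)"
    using gtm ts assms by (intro mult_strict_left_mono) auto
  also have "\<dots> \<le> t * (B1 + B2)" using h2 h3 assms by (intro mult_left_mono) auto
  finally have key: "s * At < t * As" using As_eq by (simp add: algebra_simps)
  have gpos: "g x > 0" for x by (simp add: g_def add_pos_pos)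
  have Apos: "As > 0"
  proof -
    have "integral {0..s} (\<lambda>x. g 0) \<le> As"
      unfolding As_def by (rule integral_le) (use gint gle ts assms in auto)
    moreover have "g 0 = 2" by (simp add: g_def)
    ultimately show ?thesis using ts assms by simp
  qed
  have I: "integral {-t..t} (\<lambda>b. exp (c * sin b)) = At"
    unfolding At_def g_def using sym_int[of t c] assms by simp
  have J: "integral {0..2 * pi} (\<lambda>a. exp (c * cos a)) = 2 * As"
    unfolding As_def g_def s_def by (rule whole_int)
  have "2 * At / (2 * As) < 2 * t / pi"
    using key Apos pi_gt_zero by (simp add: divide_simps s_def) (simp add: algebra_simps)
  thus ?thesis using I J by simp
qed

end
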